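(* Let $p>1$ be an integer and let $u^{(p)}$ be the fixed point of the substitution $\varphi_p(L)=L^pS$, $\varphi_p(S)=M$, $\varphi_p(M)=L^{p-1}S$. If $MzM$ is a factor of $u^{(p)}$ with $|z|_M=0$, then $z=(L^pS)^p$, or $z=L^{p-1}S(L^pS)^p$, or $z=L^{p-1}S(L^pS)^{p-1}$. Consequently $p^2+p-1\le |z|\le p^2+2p$.
   Context: $u^{(p)}=\lim_{n\to\infty}\varphi_p^n(L)$. A factor is a finite contiguous subword; $|w|$ is the length and $|w|_a$ the number of occurrences of the letter $a$ in $w$; $w^k$ denotes $k$ concatenated copies of $w$. *)

theory Defs
  imports Main
begin

datatype letter = L | S | M

fun phi :: "nat \<Rightarrow> letter \<Rightarrow> letter list" where
  "phi p L = replicate p L @ [S]"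
| "phi p S = [M]"
| "phi p M = replicate (p - 1) L @ [S]"

definition phiw :: "nat \<Rightarrow> letter list \<Rightarrow> letter list" where
  "phiw p w = concat (map (phi p) w)"

text \<open>The fixed point u^(p) = lim phi_p^n(L), as an infinite word indexed from 0:
  the i-th letter is the eventual value of the i-th letter of phi_p^n(L).\<close>
definition u :: "nat \<Rightarrow> nat \<Rightarrow> letter" where
  "u p i = (THE c. \<exists>N. \<forall>n\<ge>N. i < length ((phiw p ^^ n) [L]) \<and> ((phiw p ^^ n) [L]) ! i = c)"

definition is_factor :: "'a list \<Rightarrow> (nat \<Rightarrow> 'a) \<Rightarrow> bool" where
  "is_factor w x \<longleftrightarrow> (\<exists>k. \<forall>j<length w. x (k + j) = w ! j)"

definition wpow :: "'a list \<Rightarrow> nat \<Rightarrow> 'a list" where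
  "wpow w k = concat (replicate k w)"

end

theory Submission
  imports Defs
begin

lemma phiw_Nil[simp]: "phiw p [] = []" by (simp add: phiw_def)
lemma phiw_Cons[simp]: "phiw p (c#w) = phi p c @ phiw p w" by (simp add: phiw_def)
lemma phiw_append[simp]: "phiw p (a @ b) = phiw p a @ phiw p b" by (simp add: phiw_def)

fun good2 :: "letter \<Rightarrow> letter \<Rightarrow> bool" where
  "good2 L L = True" | "good2 L S = True" | "good2 S L = True" | "good2 S M = True"
| "good2 M L = True" | "good2 _ _ = False"

lemma sep_eq: "x \<notin> set a \<Longrightarrow> x \<notin> set c \<Longrightarrow> a @ x # b = c @ x # d \<Longrightarrow> a = c \<and> b = d"
proof (induction a arbitrary: c)
  case Nil then show ?case by (cases c) auto
next
  case (Cons y a) then show ?case by (cases c) auto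
qed

lemma prefix_lemma: "x \<notin> set xs \<Longrightarrow> xs @ ys = a @ x # r \<Longrightarrow> \<exists>a'. a = xs @ a'"
proof (induction xs arbitrary: a)
  case Nil then show ?case by auto
next
  case (Cons y xs) then show ?case by (cases a) auto
qed

lemma M_notin_phi: "c \<noteq> S \<Longrightarrow> M \<notin> set (phi p c)"
  by (cases c) auto

lemma gapM_aux: "M \<notin> set z \<Longrightarrow> phiw p w = z @ M # b \<Longrightarrow>
   \<exists>y w2. w = y @ S # w2 \<and> phiw p y = z \<and> S \<notin> set y"
proof (induction w arbitrary: z)
  case Nil then show ?case by simp
next
  case (Cons c w)
  show ?case
  proof (cases "c = S")
    case True
    with Cons.prems have "M # phiw p w = z @ M # b" by simp
    with Cons.prems(1) have "z = []" by (cases z) auto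
    with True show ?thesis by (intro exI[of _ "[]"] exI[of _ w]) auto
  next
    case False
    have e: "phi p c @ phiw p w = z @ M # b" using Cons.prems by simp
    from prefix_lemma[OF M_notin_phi[OF False] e] obtain z' where z: "z = phi p c @ z'" by blast
    with e have "phiw p w = z' @ M # b" by simp
    moreover have "M \<notin> set z'" using Cons.prems z by simp
    ultimately obtain y w2 where "w = y @ S # w2" "phiw p y = z'" "S \<notin> set y"
      using Cons.IH by blast
    with z False show ?thesis by (intro exI[of _ "c # y"] exI[of _ w2]) auto
  qed
qed

lemma hd_phi: "p > 1 \<Longrightarrow> c \<noteq> S \<Longrightarrow> \<exists>r. phi p c = L # r"
proof (cases c)
  case L assume "p > 1" then show ?thesis using L by (cases p) auto
next
  case M assume "p > 1" then show ?thesis using M by (cases "p - 1") auto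
qed auto

lemma gapM: "p > 1 \<Longrightarrow> M \<notin> set z \<Longrightarrow> phiw p w = a @ M # z @ M # b \<Longrightarrow>
   \<exists>w1 y w2. w = w1 @ S # y @ S # w2 \<and> phiw p y = z \<and> S \<notin> set y"
proof (induction w arbitrary: a)
  case Nil then show ?case by simp
next
  case (Cons c w)
  have e: "phi p c @ phiw p w = a @ M # z @ M # b" using Cons.prems by simp
  show ?case
  proof (cases "a = []")
    case True
    have "c = S"
    proof (rule ccontr)
      assume "c \<noteq> S" then obtain r where "phi p c = L # r" using hd_phi Cons.prems by blast
      with e True show False by simp
    qed
    with e True have "phiw p w = z @ M # b" by simp
    from gapM_aux[OF Cons.prems(2) this] obtain y w2 where
      "w = y @ S # w2 \<and> phiw p y = z \<and> S \<notin> set y" by blast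
    with \<open>c = S\<close> show ?thesis by (intro exI[of _ "[]"] exI[of _ y] exI[of _ w2]) auto
  next
    case False
    have "\<exists>a'. a = phi p c @ a'"
    proof (cases "c = S")
      case True then show ?thesis using e False by (cases a) auto
    next
      case F: False
      show ?thesis using prefix_lemma[OF M_notin_phi[OF F] e] .
    qed
    then obtain a' where a: "a = phi p c @ a'" by blast
    with e have "phiw p w = a' @ M # z @ M # b" by simp
    with Cons.IH Cons.prems obtain w1 y w2 where "w = w1 @ S # y @ S # w2 \<and> phiw p y = z \<and> S \<notin> set y"
      by blast
    then show ?thesis by (intro exI[of _ "c # w1"] exI[of _ y] exI[of _ w2]) auto
  qed
qed

lemma phi_nonS: "c \<noteq> S \<Longrightarrow> \<exists>k. phi p c = replicate k L @ [S]"
  by (cases c) auto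

lemma gapS_aux: "p > 1 \<Longrightarrow> successively good2 (c # v) \<Longrightarrow> c \<noteq> S \<Longrightarrow> S \<notin> set y \<Longrightarrow>
   phiw p v = y @ S # b \<Longrightarrow>
   y = replicate p L \<or> y = M # replicate p L \<or> y = M # replicate (p - 1) L"
proof (cases v)
  case Nil
  assume "phiw p v = y @ S # b" then show ?thesis using Nil by simp
next
  case (Cons d v')
  assume p: "p > 1" and sc: "successively good2 (c # v)" and c: "c \<noteq> S" and y: "S \<notin> set y"
    and e: "phiw p v = y @ S # b"
  show ?thesis
  proof (cases d)
    case L
    with e Cons have "replicate p L @ S # phiw p v' = y @ S # b" by simp
    from sep_eq[OF _ y this] show ?thesis by simp
  next
    case M
    with sc Cons c show ?thesis by (cases c) (auto simp: successively_Cons)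
  next
    case S
    with e Cons have e2: "M # phiw p v' = y @ S # b" by simp
    then obtain y' where y': "y = M # y'" by (cases y) auto
    with e2 have e3: "phiw p v' = y' @ S # b" by simp
    show ?thesis
    proof (cases v')
      case Nil with e3 show ?thesis by simp
    next
      case (Cons e v'')
      have ge: "good2 S e" using sc \<open>v = d # v'\<close> S Cons by (simp add: successively_Cons)
      show ?thesis
      proof (cases e)
        case L
        with e3 Cons have "replicate p L @ S # phiw p v'' = y' @ S # b" by simp
        from sep_eq[OF _ _ this] y y' show ?thesis by simp
      next
        case M
        with e3 Cons have "replicate (p - 1) L @ S # phiw p v'' = y' @ S # b" by simp
        from sep_eq[OF _ _ this] y y' show ?thesis by simp
      next
        case S with ge show ?thesis by simp
      qed
    qed
  qed
qed

lemma gapS: "p > 1 \<Longrightarrow> successively good2 v \<Longrightarrow> S \<notin> set y \<Longrightarrow>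
   phiw p v = a @ S # y @ S # b \<Longrightarrow>
   y = replicate p L \<or> y = M # replicate p L \<or> y = M # replicate (p - 1) L"
proof (induction v arbitrary: a)
  case Nil then show ?case by simp
next
  case (Cons c v)
  have e: "phi p c @ phiw p v = a @ S # y @ S # b" using Cons.prems by simp
  have sv: "successively good2 v" using Cons.prems(2) by (auto simp: successively_Cons)
  show ?case
  proof (cases "c = S")
    case True
    with e obtain a' where a: "a = M # a'" by (cases a) auto
    with e True have "phiw p v = a' @ S # y @ S # b" by simp
    from Cons.IH[OF Cons.prems(1) sv Cons.prems(3) this] show ?thesis .
  next
    case False
    then obtain k where k: "phi p c = replicate k L @ [S]" using phi_nonS by blast
    with e have e': "replicate k L @ (S # phiw p v) = a @ S # (y @ S # b)" by simp
    from prefix_lemma[OF _ e'] obtain a' where a: "a = replicate k L @ a'" by auto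
    with e' have e2: "S # phiw p v = a' @ S # y @ S # b" by simp
    show ?thesis
    proof (cases a')
      case Nil
      with e2 have "phiw p v = y @ S # b" by simp
      from gapS_aux[OF Cons.prems(1) Cons.prems(2) False Cons.prems(3) this] show ?thesis .
    next
      case (Cons x a'')
      with e2 have "phiw p v = a'' @ S # y @ S # b" by simp
      from Cons.IH[OF Cons.prems(1) sv Cons.prems(3) this] show ?thesis .
    qed
  qed
qed

lemma succ_rep: "successively good2 (replicate k L @ [S])"
  by (induction k) (auto simp: successively_Cons hd_append)

lemma succ_phi: "successively good2 (phi p c)"
  by (cases c) (auto simp: succ_rep)

lemma last_phi: "last (phi p c) = (if c = S then M else S)"
  by (cases c) auto

lemma succ_phiw: "p > 1 \<Longrightarrow> successively good2 w \<Longrightarrow> successively good2 (phiw p w)"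
proof (induction w)
  case Nil then show ?case by simp
next
  case (Cons c w)
  have sw: "successively good2 w" using Cons.prems(2) by (auto simp: successively_Cons)
  have IH: "successively good2 (phiw p w)" using Cons.IH Cons.prems(1) sw by blast
  show ?case
  proof (cases w)
    case Nil then show ?thesis using succ_phi by simp
  next
    case (Cons d w')
    have g: "good2 c d" using Cons.prems(2) \<open>w = d # w'\<close> by (simp add: successively_Cons)
    have junc: "good2 (last (phi p c)) (hd (phi p d))"
    proof (cases "d = S")
      case True then show ?thesis using g by (cases c) auto
    next
      case False
      then obtain r where "phi p d = L # r" using hd_phi Cons.prems(1) by blast
      then have "hd (phi p d) = L" by simp
      then show ?thesis using g False by (cases c; cases d) (auto simp: last_phi simp del: phi.simps)
    qed
    have "phi p d \<noteq> []" by (cases d) auto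
    then have "hd (phiw p w) = hd (phi p d)" using \<open>w = d # w'\<close> by simp
    moreover have "phi p c \<noteq> []" by (cases c) auto
    ultimately show ?thesis using junc IH succ_phi \<open>w = d # w'\<close> \<open>phi p d \<noteq> []\<close>
      by (simp add: successively_append_iff del: phi.simps)
  qed
qed

definition W :: "nat \<Rightarrow> nat \<Rightarrow> letter list" where "W p n = (phiw p ^^ n) [L]"

lemma W_0: "W p 0 = [L]" by (simp add: W_def)
lemma W_Suc: "W p (Suc n) = phiw p (W p n)" by (simp add: W_def)

lemma W_succ: "p > 1 \<Longrightarrow> successively good2 (W p n)"
  by (induction n) (auto simp: W_0 W_Suc succ_phiw)

lemma len_phiw: "p > 1 \<Longrightarrow> length (phiw p w) \<ge> length w"
proof (induction w)
  case (Cons c w) then show ?case by (cases c) auto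
qed simp

lemma W_hd: assumes "p > 1" shows "\<exists>r. W p n = L # r"
proof -
  obtain q where q: "p = Suc q" using assms by (cases p) auto
  show ?thesis by (induction n) (auto simp: W_0 W_Suc q)
qed

lemma W_len: "p > 1 \<Longrightarrow> length (W p n) \<ge> Suc n"
proof (induction n)
  case 0 then show ?case by (simp add: W_0)
next
  case (Suc n)
  obtain r where r: "W p n = L # r" using W_hd Suc.prems by blast
  have "length (phiw p r) \<ge> length r" using len_phiw Suc.prems by blast
  then have "length (W p (Suc n)) \<ge> Suc (Suc (length r))" using r Suc.prems by (simp add: W_Suc)
  then show ?case using Suc r by simp
qed

lemma W_prefix: "p > 1 \<Longrightarrow> \<exists>r. W p (Suc n) = W p n @ r"
proof (induction n)
  case 0
  obtain q where "p = Suc q" using 0 by (cases p) auto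
  then show ?case by (simp add: W_0 W_Suc)
next
  case (Suc n)
  then obtain r where "W p (Suc n) = W p n @ r" by blast
  then show ?case by (simp add: W_Suc)
qed

lemma W_prefix_le: assumes p: "p > 1" and nm: "n \<le> m" shows "\<exists>r. W p m = W p n @ r"
  using nm
proof (induction m rule: dec_induct)
  case base then show ?case by simp
next
  case (step m)
  then obtain r where "W p m = W p n @ r" by blast
  moreover obtain r' where "W p (Suc m) = W p m @ r'" using W_prefix p by blast
  ultimately show ?case by auto
qed

lemma u_eq: assumes p: "p > 1" and i: "i < length (W p n)" shows "u p i = W p n ! i"
proof -
  have P: "\<forall>m\<ge>n. i < length (W p m) \<and> W p m ! i = W p n ! i"
  proof (intro allI impI)
    fix m assume "n \<le> m"
    then obtain r where "W p m = W p n @ r" using W_prefix_le p by blast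
    then show "i < length (W p m) \<and> W p m ! i = W p n ! i" using i by (simp add: nth_append)
  qed
  show ?thesis unfolding u_def W_def[symmetric]
  proof (rule the_equality)
    show "\<exists>N. \<forall>m\<ge>N. i < length (W p m) \<and> W p m ! i = W p n ! i" using P by blast
  next
    fix c assume "\<exists>N. \<forall>m\<ge>N. i < length (W p m) \<and> W p m ! i = c"
    then obtain N where N: "\<forall>m\<ge>N. i < length (W p m) \<and> W p m ! i = c" by blast
    have "W p (max N n) ! i = c" using N max.cobounded1 by blast
    moreover have "W p (max N n) ! i = W p n ! i" using P max.cobounded2 by blast
    ultimately show "c = W p n ! i" by simp
  qed
qed

lemma phiw_rep: "phiw p (replicate k L) = wpow (replicate p L @ [S]) k"
  by (induction k) (auto simp: wpow_def)

lemma len_wpow: "length (wpow w k) = k * length w"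
  by (simp add: wpow_def length_concat sum_list_replicate)

theorem mainTheorem5:
  fixes p :: nat and z :: "letter list"
  assumes "p > 1"
    and "is_factor ([M] @ z @ [M]) (u p)"
    and "count_list z M = 0"
  shows "(z = wpow (replicate p L @ [S]) p
          \<or> z = replicate (p - 1) L @ [S] @ wpow (replicate p L @ [S]) p
          \<or> z = replicate (p - 1) L @ [S] @ wpow (replicate p L @ [S]) (p - 1))
         \<and> p^2 + p - 1 \<le> length z \<and> length z \<le> p^2 + 2*p"
proof -
  define v where "v = [M] @ z @ [M]"
  have p: "p > 1" by fact
  have Mz: "M \<notin> set z" using assms(3) by (simp add: count_list_0_iff)
  obtain k where k: "\<forall>j<length v. u p (k + j) = v ! j"
    using assms(2) unfolding is_factor_def v_def by blast
  define n where "n = k + length v"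
  have len: "length (W p n) \<ge> Suc n" using W_len p by blast
  have nth: "W p n ! (k + j) = v ! j" if "j < length v" for j
    using k that u_eq[OF p, of "k + j" n] len unfolding n_def by simp
  have tk: "take (length v) (drop k (W p n)) = v"
    by (rule nth_equalityI) (use len nth in \<open>auto simp: n_def\<close>)
  have "W p n = take k (W p n) @ take (length v) (drop k (W p n)) @ drop (length v) (drop k (W p n))"
    by (metis append_take_drop_id)
  then have Wn: "W p n = take k (W p n) @ M # z @ M # drop (length v) (drop k (W p n))"
    using tk by (simp add: v_def)
  have ge2: "2 \<le> n" unfolding n_def v_def by simp
  define n' where "n' = n - 2"
  have n': "n = Suc (Suc n')" using ge2 unfolding n'_def by arith
  have e: "phiw p (phiw p (W p n')) = W p n" unfolding n' by (simp only: W_Suc)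
  have "phiw p (phiw p (W p n')) = take k (W p n) @ M # z @ M # drop (length v) (drop k (W p n))"
    unfolding e by (rule Wn)
  from gapM[OF p Mz this] obtain w1 y w2 where
    y: "phiw p (W p n') = w1 @ S # y @ S # w2" "phiw p y = z" "S \<notin> set y" by blast
  from gapS[OF p W_succ[OF p] y(3) y(1)]
  have ycases: "y = replicate p L \<or> y = M # replicate p L \<or> y = M # replicate (p - 1) L" .
  have sq: "p^2 = p * p" by (simp add: power2_eq_square)
  have lp: "length (replicate p L @ [S]) = Suc p" by simp
  have lw1: "length (wpow (replicate p L @ [S]) p) = p * p + p"
    unfolding len_wpow lp by simp
  have lw2: "length (wpow (replicate p L @ [S]) (p - 1)) = (p - 1) * p + (p - 1)"
    unfolding len_wpow lp by simp
  have pp: "(p - 1) * p = p * p - p" by (simp add: diff_mult_distrib)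
  have pp2: "p \<le> p * p" using p by simp
  consider (a) "y = replicate p L" | (b) "y = M # replicate p L" | (c) "y = M # replicate (p - 1) L"
    using ycases by blast
  then show ?thesis
  proof cases
    case a
    then have "z = wpow (replicate p L @ [S]) p" using y(2) by (simp add: phiw_rep del: phi.simps)
    then show ?thesis using lw1 p unfolding sq by simp
  next
    case b
    then have "z = replicate (p - 1) L @ [S] @ wpow (replicate p L @ [S]) p"
      using y(2) by (simp add: phiw_rep)
    then show ?thesis using lw1 p unfolding sq by simp
  next
    case c
    then have "z = replicate (p - 1) L @ [S] @ wpow (replicate p L @ [S]) (p - 1)"
      using y(2) by (simp add: phiw_rep)
    then show ?thesis using lw2 p pp pp2 unfolding sq by (simp; linarith)
  qed
qed

end
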